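(* Let $\gamma,\sigma:[a,b]\to V$ be continuous bounded variation paths, fix $(s,t)\in[a,b]^2$, and define $f(x):=K^{x\gamma,\sigma}(s,t)$ for $x\in\mathbb{R}$. Then $f$ is infinitely differentiable and for every $k\in\mathbb{N}$, \[ f^{(k)}(x)=\sum_{l=0}^\infty x^l\frac{(l+k)!}{l!}\left\langle S(\gamma)^{l+k}_{a,s},S(\sigma)^{l+k}_{a,t}\right\rangle_{l+k}. \] In particular, for $x\neq0$, \[ |f^{(k)}(x)|\le\frac{L_s(\gamma)^{k/2}L_t(\sigma)^{k/2}}{|x|^{k/2}}\,I_k\left(2\sqrt{|x|L_s(\gamma)L_t(\sigma)}\right), \] where $I_k$ is the modified Bessel function of the first kind of order $k$.
   Context: $V$ is a finite-dimensional real inner product space, $\langle\cdot,\cdot\rangle_k$ the induced Hilbert–Schmidt inner product on $V^{\otimes k}$. Signature: $S(\gamma)^0=1$, $S(\gamma)^k_{s,t}=\int_{s<u_1<\dots<u_k<t}d\gamma_{u_1}\otimes\cdots\otimes d\gamma_{u_k}$. $K^{x\gamma,\sigma}(s,t)=\sum_{k\ge0}x^k\langle S(\gamma)^k_{a,s},S(\sigma)^k_{a,t}\rangle_k$. $L_s(\gamma)$ is the length of $\gamma|_{[a,s]}$. *)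

theory Defs
  imports "HOL-Analysis.Analysis"
begin

definition is_partition :: "real \<Rightarrow> real \<Rightarrow> nat \<Rightarrow> (nat \<Rightarrow> real) \<Rightarrow> bool" where
  "is_partition a b n p \<longleftrightarrow> p 0 = a \<and> p n = b \<and> (\<forall>i<n. p i < p (Suc i))"

definition variation_sums :: "(real \<Rightarrow> 'v::real_normed_vector) \<Rightarrow> real \<Rightarrow> real \<Rightarrow> real set" where
  "variation_sums \<gamma> a b =
     {(\<Sum>i<n. norm (\<gamma> (p (Suc i)) - \<gamma> (p i))) | n p. is_partition a b n p}"

definition bounded_variation_on :: "(real \<Rightarrow> 'v::real_normed_vector) \<Rightarrow> real \<Rightarrow> real \<Rightarrow> bool" where
  "bounded_variation_on \<gamma> a b \<longleftrightarrow> bdd_above (variation_sums \<gamma> a b)"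

text \<open>Length of the path restricted to [a,s], i.e. L_s(gamma) = path_length gamma a s.\<close>
definition path_length :: "(real \<Rightarrow> 'v::real_normed_vector) \<Rightarrow> real \<Rightarrow> real \<Rightarrow> real" where
  "path_length \<gamma> a s = Sup (variation_sums \<gamma> a s)"

definition has_RS_integral :: "(real \<Rightarrow> real) \<Rightarrow> (real \<Rightarrow> real) \<Rightarrow> real \<Rightarrow> real \<Rightarrow> real \<Rightarrow> bool" where
  "has_RS_integral f g a b I \<longleftrightarrow>
     (\<forall>\<epsilon>>0. \<exists>\<delta>>0. \<forall>n p \<tau>. is_partition a b n p
        \<and> (\<forall>i<n. p i \<le> \<tau> i \<and> \<tau> i \<le> p (Suc i) \<and> p (Suc i) - p i < \<delta>)
        \<longrightarrow> \<bar>(\<Sum>i<n. f (\<tau> i) * (g (p (Suc i)) - g (p i))) - I\<bar> < \<epsilon>)"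

definition RS_integral :: "(real \<Rightarrow> real) \<Rightarrow> (real \<Rightarrow> real) \<Rightarrow> real \<Rightarrow> real \<Rightarrow> real" where
  "RS_integral f g a b = (THE I. has_RS_integral f g a b I)"

text \<open>Coordinates of the signature with respect to the orthonormal basis Basis.
  A word is stored REVERSED: sig_coord gamma a (e # w) t is the coefficient of the
  basis tensor (rev w) \<otimes> e of S(gamma)_{a,t}, defined by the usual recursion
  S^{k+1}_{a,t} = int_a^t S^k_{a,u} \<otimes> d gamma_u.\<close>
fun sig_coord :: "(real \<Rightarrow> 'v::euclidean_space) \<Rightarrow> real \<Rightarrow> 'v list \<Rightarrow> real \<Rightarrow> real" where
  "sig_coord \<gamma> a [] t = 1"
| "sig_coord \<gamma> a (e # w) t = RS_integral (\<lambda>u. sig_coord \<gamma> a w u) (\<lambda>u. \<gamma> u \<bullet> e) a t"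

text \<open>Words of length k over the basis; they index an orthonormal basis of V^{\<otimes>k}.\<close>
definition words :: "nat \<Rightarrow> 'v::euclidean_space list set" where
  "words k = {w. length w = k \<and> set w \<subseteq> Basis}"

definition sig_level :: "(real \<Rightarrow> 'v::euclidean_space) \<Rightarrow> real \<Rightarrow> nat \<Rightarrow> real \<Rightarrow> ('v list \<Rightarrow> real)" where
  "sig_level \<gamma> a k t = (\<lambda>w. if w \<in> words k then sig_coord \<gamma> a w t else 0)"

definition hs_inner :: "nat \<Rightarrow> ('v::euclidean_space list \<Rightarrow> real) \<Rightarrow> ('v list \<Rightarrow> real) \<Rightarrow> real" where
  "hs_inner k A B = (\<Sum>w\<in>words k. A w * B w)"

definition sig_kernel :: "(real \<Rightarrow> 'v::euclidean_space) \<Rightarrow> (real \<Rightarrow> 'v) \<Rightarrow> real \<Rightarrow> real \<Rightarrow> real \<Rightarrow> real" where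
  "sig_kernel \<gamma> \<sigma> a s t = (\<Sum>k. hs_inner k (sig_level \<gamma> a k s) (sig_level \<sigma> a k t))"

definition bessel_I :: "nat \<Rightarrow> real \<Rightarrow> real" where
  "bessel_I k z = (\<Sum>m. (z / 2) ^ (2 * m + k) / (fact m * fact (m + k)))"

end

theory Submission
  imports Defs
begin


lemma part_strict:
  assumes "is_partition p q n P" "i < j" "j \<le> n"
  shows "P i < P j"
  using assms(2,3)
proof (induction j)
  case 0 then show ?case by simp
next
  case (Suc j)
  have s: "P j < P (Suc j)" using assms(1) Suc.prems unfolding is_partition_def by auto
  show ?case
  proof (cases "i = j")
    case True then show ?thesis using s by simp
  next
    case False then have "i < j" using Suc.prems by simp
    then show ?thesis using Suc.IH Suc.prems s by simp
  qed
qed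

lemma part_mono:
  assumes "is_partition p q n P" "i \<le> j" "j \<le> n"
  shows "P i \<le> P j"
  using part_strict[OF assms(1), of i j] assms by (cases "i = j") auto

lemma part_bounds:
  assumes "is_partition p q n P" "i \<le> n"
  shows "p \<le> P i" "P i \<le> q"
  using part_mono[OF assms(1), of 0 i] part_mono[OF assms(1), of i n] assms
  unfolding is_partition_def by auto

lemma part_le:
  assumes "is_partition p q n P" shows "p \<le> q"
  using part_mono[OF assms, of 0 n] assms unfolding is_partition_def by auto

lemma part_trivial:
  assumes "is_partition p p n P" shows "n = 0"
proof (rule ccontr)
  assume "n \<noteq> 0"
  then have "P 0 < P n" using part_strict[OF assms, of 0 n] by simp
  then show False using assms unfolding is_partition_def by simp
qed

lemma part_append:
  assumes "is_partition a p n P" "p < q"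
  shows "is_partition a q (Suc n) (P(Suc n := q))"
  using assms unfolding is_partition_def
  by (auto simp: less_Suc_eq)

lemma part_exists:
  assumes "a \<le> p" shows "\<exists>n P. is_partition a p n P"
proof (cases "a = p")
  case True
  then show ?thesis by (intro exI[of _ 0] exI[of _ "\<lambda>_. a"]) (simp add: is_partition_def)
next
  case False
  then show ?thesis using assms
    by (intro exI[of _ 1] exI[of _ "\<lambda>i. if i = 0 then a else p"]) (auto simp add: is_partition_def)
qed

definition RSsum :: "(real \<Rightarrow> real) \<Rightarrow> (real \<Rightarrow> real) \<Rightarrow> nat \<Rightarrow> (nat \<Rightarrow> real) \<Rightarrow> (nat \<Rightarrow> real) \<Rightarrow> real" where
  "RSsum f g n P \<tau> = (\<Sum>i<n. f (\<tau> i) * (g (P (Suc i)) - g (P i)))"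

definition tagged :: "real \<Rightarrow> real \<Rightarrow> nat \<Rightarrow> (nat \<Rightarrow> real) \<Rightarrow> (nat \<Rightarrow> real) \<Rightarrow> real \<Rightarrow> bool" where
  "tagged p q n P \<tau> \<delta> \<longleftrightarrow> is_partition p q n P \<and> (\<forall>i<n. P i \<le> \<tau> i \<and> \<tau> i \<le> P (Suc i) \<and> P (Suc i) - P i < \<delta>)"

lemma has_RS_alt:
  "has_RS_integral f g p q I \<longleftrightarrow> (\<forall>\<epsilon>>0. \<exists>\<delta>>0. \<forall>n P \<tau>. tagged p q n P \<tau> \<delta> \<longrightarrow> \<bar>RSsum f g n P \<tau> - I\<bar> < \<epsilon>)"
  unfolding has_RS_integral_def tagged_def RSsum_def by blast

lemma tagged_mono: "tagged p q n P \<tau> \<delta> \<Longrightarrow> \<delta> \<le> \<delta>' \<Longrightarrow> tagged p q n P \<tau> \<delta>'"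
  unfolding tagged_def by force

lemma tagged_in:
  assumes "tagged p q n P \<tau> \<delta>" "i < n"
  shows "p \<le> \<tau> i" "\<tau> i \<le> q" "p \<le> P i" "P (Suc i) \<le> q"
  using assms part_bounds[of p q n P i] part_bounds[of p q n P "Suc i"] unfolding tagged_def
  by force+

lemma fine_exists:
  assumes "p \<le> q" "\<delta> > 0"
  shows "\<exists>n P. tagged p q n P P \<delta>"
proof (cases "p = q")
  case True
  then show ?thesis by (intro exI[of _ 0] exI[of _ "\<lambda>_. p"]) (simp add: tagged_def is_partition_def)
next
  case False
  then have pq: "p < q" using assms by simp
  obtain n :: nat where n: "(q - p) / \<delta> < n" using reals_Archimedean2 by blast
  have npos: "n > 0" using n pq assms(2) by (cases n) (auto simp: field_simps)
  define P where "P = (\<lambda>i::nat. p + real i * (q - p) / real n)"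
  have m: "(q - p) / real n < \<delta>" using n npos assms(2) by (simp add: field_simps)
  have ip: "is_partition p q n P" unfolding is_partition_def P_def using npos pq
    by (auto simp: field_simps)
  have d: "P (Suc i) - P i = (q - p) / real n" for i unfolding P_def by (simp add: diff_divide_distrib[symmetric] algebra_simps)
  have pos: "(q - p) / real n > 0" using pq npos by simp
  have le: "P i \<le> P (Suc i)" for i using d[of i] pos by linarith
  show ?thesis unfolding tagged_def
    by (intro exI[of _ n] exI[of _ P]) (use ip le d m in auto)
qed

lemma RS_unique:
  assumes "has_RS_integral f g p q I" "has_RS_integral f g p q J" "p \<le> q"
  shows "I = J"
proof (rule ccontr)
  assume ne: "I \<noteq> J"
  define e where "e = \<bar>I - J\<bar> / 2"
  have e: "e > 0" using ne by (simp add: e_def)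
  obtain d1 where d1: "d1 > 0" "\<forall>n P \<tau>. tagged p q n P \<tau> d1 \<longrightarrow> \<bar>RSsum f g n P \<tau> - I\<bar> < e"
    using assms(1) e unfolding has_RS_alt by blast
  obtain d2 where d2: "d2 > 0" "\<forall>n P \<tau>. tagged p q n P \<tau> d2 \<longrightarrow> \<bar>RSsum f g n P \<tau> - J\<bar> < e"
    using assms(2) e unfolding has_RS_alt by blast
  obtain n P where P: "tagged p q n P P (min d1 d2)" using fine_exists[OF assms(3), of "min d1 d2"] d1 d2 by auto
  have "\<bar>RSsum f g n P P - I\<bar> < e" "\<bar>RSsum f g n P P - J\<bar> < e"
    using d1 d2 tagged_mono[OF P] by auto
  moreover have "\<bar>I - J\<bar> \<le> \<bar>RSsum f g n P P - I\<bar> + \<bar>RSsum f g n P P - J\<bar>" by arith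
  ultimately show False using e_def by argo
qed

lemma RS_integral_eq:
  assumes "has_RS_integral f g p q I" "p \<le> q"
  shows "RS_integral f g p q = I"
  unfolding RS_integral_def by (rule the_equality) (use RS_unique[OF _ _ assms(2)] assms(1) in auto)

lemma RS_bound:
  assumes "has_RS_integral f g p q I" "p \<le> q" "\<delta> > 0"
    "\<And>n P \<tau>. tagged p q n P \<tau> \<delta> \<Longrightarrow> \<bar>RSsum f g n P \<tau> - c\<bar> \<le> B"
  shows "\<bar>I - c\<bar> \<le> B"
proof (rule field_le_epsilon)
  fix e :: real assume e: "e > 0"
  obtain d1 where d1: "d1 > 0" "\<forall>n P \<tau>. tagged p q n P \<tau> d1 \<longrightarrow> \<bar>RSsum f g n P \<tau> - I\<bar> < e"
    using assms(1) e unfolding has_RS_alt by blast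
  obtain n P where P: "tagged p q n P P (min d1 \<delta>)" using fine_exists[OF assms(2), of "min d1 \<delta>"] d1 assms(3) by auto
  have "\<bar>RSsum f g n P P - I\<bar> < e" "\<bar>RSsum f g n P P - c\<bar> \<le> B"
    using d1 assms(4) tagged_mono[OF P] by auto
  then show "\<bar>I - c\<bar> \<le> B + e" by linarith
qed

lemma RS_scale:
  assumes "has_RS_integral f g p q I"
  shows "has_RS_integral (\<lambda>u. c * f u) (\<lambda>u. d * g u) p q (c * d * I)"
  unfolding has_RS_alt
proof (intro allI impI)
  fix e :: real assume e: "e > 0"
  have e': "e / (\<bar>c * d\<bar> + 1) > 0" using e by (simp add: add_pos_nonneg)
  obtain dl where dl: "dl > 0" "\<forall>n P \<tau>. tagged p q n P \<tau> dl \<longrightarrow> \<bar>RSsum f g n P \<tau> - I\<bar> < e / (\<bar>c * d\<bar> + 1)"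
    using assms e' unfolding has_RS_alt by blast
  show "\<exists>\<delta>>0. \<forall>n P \<tau>. tagged p q n P \<tau> \<delta> \<longrightarrow> \<bar>RSsum (\<lambda>u. c * f u) (\<lambda>u. d * g u) n P \<tau> - c * d * I\<bar> < e"
  proof (intro exI[of _ dl] conjI allI impI)
    fix n P \<tau> assume t: "tagged p q n P \<tau> dl"
    have eq: "RSsum (\<lambda>u. c * f u) (\<lambda>u. d * g u) n P \<tau> - c * d * I = (c * d) * (RSsum f g n P \<tau> - I)"
      unfolding RSsum_def by (simp add: sum_distrib_left algebra_simps)
    have "\<bar>c * d\<bar> * \<bar>RSsum f g n P \<tau> - I\<bar> \<le> \<bar>c * d\<bar> * (e / (\<bar>c * d\<bar> + 1))"
      using dl t by (intro mult_left_mono) (auto intro: less_imp_le)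
    also have "\<dots> < e" using e by (simp add: field_simps)
    finally show "\<bar>RSsum (\<lambda>u. c * f u) (\<lambda>u. d * g u) n P \<tau> - c * d * I\<bar> < e"
      unfolding eq abs_mult .
  qed (use dl in auto)
qed

lemma RS_cong:
  assumes "has_RS_integral f g p q I" "\<And>u. p \<le> u \<Longrightarrow> u \<le> q \<Longrightarrow> f u = f' u \<and> g u = g' u"
  shows "has_RS_integral f' g' p q I"
proof -
  have "RSsum f g n P \<tau> = RSsum f' g' n P \<tau>" if "tagged p q n P \<tau> d" for n P \<tau> d
    unfolding RSsum_def
  proof (rule sum.cong)
    fix i assume "i \<in> {..<n}"
    then have i: "i < n" by simp
    have "P (Suc i) \<ge> p" "P i \<le> q" using tagged_in[OF that i] that i unfolding tagged_def
      by (smt (verit, ccfv_SIG))+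
    then show "f (\<tau> i) * (g (P (Suc i)) - g (P i)) = f' (\<tau> i) * (g' (P (Suc i)) - g' (P i))"
      using assms(2) tagged_in[OF that i] by auto
  qed simp
  then show ?thesis using assms(1) unfolding has_RS_alt by metis
qed



lemma var_append_sum:
  assumes "is_partition a p n P" "p < q"
  shows "(\<Sum>i<Suc n. norm (\<gamma> ((P(Suc n := q)) (Suc i)) - \<gamma> ((P(Suc n := q)) i)))
       = (\<Sum>i<n. norm (\<gamma> (P (Suc i)) - \<gamma> (P i))) + norm (\<gamma> q - \<gamma> p)"
  using assms unfolding is_partition_def by (auto intro!: sum.cong)

lemma var_bdd:
  assumes "bounded_variation_on \<gamma> a b" "q \<le> b"
  shows "bdd_above (variation_sums \<gamma> a q)"
proof (cases "q = b")
  case True then show ?thesis using assms unfolding bounded_variation_on_def by simp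
next
  case False
  then have qb: "q < b" using assms by simp
  obtain M where M: "\<forall>v\<in>variation_sums \<gamma> a b. v \<le> M"
    using assms(1) unfolding bounded_variation_on_def bdd_above_def by auto
  show ?thesis unfolding bdd_above_def
  proof (intro exI[of _ M] ballI)
    fix v assume "v \<in> variation_sums \<gamma> a q"
    then obtain n P where P: "is_partition a q n P" "v = (\<Sum>i<n. norm (\<gamma> (P (Suc i)) - \<gamma> (P i)))"
      unfolding variation_sums_def by auto
    have "v + norm (\<gamma> b - \<gamma> q) \<in> variation_sums \<gamma> a b"
      unfolding variation_sums_def
      using part_append[OF P(1) qb] var_append_sum[OF P(1) qb, of \<gamma>] P(2)
      by (intro CollectI exI[of _ "Suc n"] exI[of _ "P(Suc n := b)"]) simp
    then show "v \<le> M" using M by (smt (verit) norm_ge_zero)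
  qed
qed

lemma var_nonempty: "a \<le> p \<Longrightarrow> variation_sums \<gamma> a p \<noteq> {}"
  using part_exists unfolding variation_sums_def by blast

lemma var_step:
  assumes "bounded_variation_on \<gamma> a b" "a \<le> x" "x \<le> y" "y \<le> b"
  shows "path_length \<gamma> a x + norm (\<gamma> y - \<gamma> x) \<le> path_length \<gamma> a y"
proof (cases "x = y")
  case True then show ?thesis by simp
next
  case False
  then have xy: "x < y" using assms by simp
  have bdd: "bdd_above (variation_sums \<gamma> a y)" using var_bdd[OF assms(1,4)] .
  have "Sup (variation_sums \<gamma> a x) \<le> path_length \<gamma> a y - norm (\<gamma> y - \<gamma> x)"
  proof (rule cSup_least[OF var_nonempty[OF assms(2)]])
    fix v assume "v \<in> variation_sums \<gamma> a x"
    then obtain n P where P: "is_partition a x n P" "v = (\<Sum>i<n. norm (\<gamma> (P (Suc i)) - \<gamma> (P i)))"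
      unfolding variation_sums_def by auto
    have "v + norm (\<gamma> y - \<gamma> x) \<in> variation_sums \<gamma> a y"
      unfolding variation_sums_def
      using part_append[OF P(1) xy] var_append_sum[OF P(1) xy, of \<gamma>] P(2)
      by (intro CollectI exI[of _ "Suc n"] exI[of _ "P(Suc n := y)"]) simp
    then have "v + norm (\<gamma> y - \<gamma> x) \<le> path_length \<gamma> a y"
      unfolding path_length_def using bdd by (rule cSup_upper)
    then show "v \<le> path_length \<gamma> a y - norm (\<gamma> y - \<gamma> x)" by simp
  qed
  then show ?thesis unfolding path_length_def by simp
qed

lemma var_zero: "path_length \<gamma> a a = 0"
proof -
  have "variation_sums \<gamma> a a = {0}"
  proof -
    have "variation_sums \<gamma> a a \<subseteq> {0}" unfolding variation_sums_def using part_trivial by fastforce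
    then show ?thesis using var_nonempty[of a a \<gamma>] by blast
  qed
  then show ?thesis unfolding path_length_def by simp
qed

lemma var_nonneg:
  assumes "bounded_variation_on \<gamma> a b" "a \<le> x" "x \<le> b"
  shows "path_length \<gamma> a x \<ge> 0"
  using var_step[OF assms(1) order_refl assms(2,3)] var_zero[of \<gamma> a] by (smt (verit) norm_ge_zero)

lemma var_control:
  fixes \<gamma> :: "real \<Rightarrow> 'v::euclidean_space"
  assumes "bounded_variation_on \<gamma> a b" "e \<in> Basis" "a \<le> x" "x \<le> y" "y \<le> b"
  shows "\<bar>\<gamma> y \<bullet> e - \<gamma> x \<bullet> e\<bar> \<le> path_length \<gamma> a y - path_length \<gamma> a x"
proof -
  have "\<bar>\<gamma> y \<bullet> e - \<gamma> x \<bullet> e\<bar> = \<bar>(\<gamma> y - \<gamma> x) \<bullet> e\<bar>" by (simp add: inner_diff_left)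
  also have "\<dots> \<le> norm (\<gamma> y - \<gamma> x)" using assms(2) by (rule Basis_le_norm)
  finally show ?thesis using var_step[OF assms(1,3,4,5)] by simp
qed



definition ctrl :: "(real \<Rightarrow> real) \<Rightarrow> (real \<Rightarrow> real) \<Rightarrow> real \<Rightarrow> real \<Rightarrow> bool" where
  "ctrl g W p q \<longleftrightarrow> (\<forall>x y. p \<le> x \<longrightarrow> x \<le> y \<longrightarrow> y \<le> q \<longrightarrow> \<bar>g y - g x\<bar> \<le> W y - W x)"

definition ucont :: "(real \<Rightarrow> real) \<Rightarrow> real \<Rightarrow> real \<Rightarrow> real \<Rightarrow> real \<Rightarrow> bool" where
  "ucont f p q \<epsilon> \<delta> \<longleftrightarrow> (\<forall>x y. p \<le> x \<longrightarrow> x \<le> q \<longrightarrow> p \<le> y \<longrightarrow> y \<le> q \<longrightarrow> \<bar>x - y\<bar> < \<delta> \<longrightarrow> \<bar>f x - f y\<bar> \<le> \<epsilon>)"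

lemma block_sum:
  fixes h :: "nat \<Rightarrow> real"
  assumes "\<forall>i<n. m i \<le> m (Suc i)"
  shows "m 0 \<le> m n \<and> (\<Sum>i<n. \<Sum>j\<in>{m i..<m (Suc i)}. h j) = (\<Sum>j\<in>{m 0..<m n}. h j)"
  using assms
proof (induction n)
  case 0 then show ?case by simp
next
  case (Suc n)
  then have IH: "m 0 \<le> m n" "(\<Sum>i<n. \<Sum>j\<in>{m i..<m (Suc i)}. h j) = (\<Sum>j\<in>{m 0..<m n}. h j)" by auto
  have s: "m n \<le> m (Suc n)" using Suc.prems by simp
  show ?case using IH s sum.atLeastLessThan_concat[of "m 0" "m n" "m (Suc n)" h] by simp
qed

lemma refine_bound:
  assumes c: "ctrl g W p q" and r: "is_partition p q N r" and t: "tagged p q n P \<tau> \<delta>"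
    and sub: "\<forall>i\<le>n. \<exists>j\<le>N. P i = r j" and u: "ucont f p q \<epsilon> \<delta>"
  shows "\<bar>RSsum f g n P \<tau> - RSsum f g N r r\<bar> \<le> \<epsilon> * (W q - W p)"
proof -
  have Pp: "is_partition p q n P" using t unfolding tagged_def by simp
  obtain m where m: "\<And>i. i \<le> n \<Longrightarrow> m i \<le> N \<and> P i = r (m i)"
    using sub by metis
  have ms: "m i < m (Suc i)" if "i < n" for i
  proof (rule ccontr)
    assume "\<not> m i < m (Suc i)"
    then have "r (m (Suc i)) \<le> r (m i)" using part_mono[OF r, of "m (Suc i)" "m i"] m[of i] that by simp
    moreover have "P i < P (Suc i)" using Pp that unfolding is_partition_def by simp
    ultimately show False using m[of i] m[of "Suc i"] that by simp
  qed
  have m0: "m 0 = 0"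
  proof (rule ccontr)
    assume "m 0 \<noteq> 0"
    then have "r 0 < r (m 0)" using part_strict[OF r, of 0 "m 0"] m[of 0] by simp
    then show False using m[of 0] r Pp unfolding is_partition_def by simp
  qed
  have mn: "m n = N"
  proof (rule ccontr)
    assume "m n \<noteq> N"
    then have "r (m n) < r N" using part_strict[OF r, of "m n" N] m[of n] by simp
    then show False using m[of n] r Pp unfolding is_partition_def by simp
  qed
  have mle: "\<forall>i<n. m i \<le> m (Suc i)" using ms by (simp add: less_imp_le)
  define D where "D j = g (r (Suc j)) - g (r j)" for j
  have tel: "g (P (Suc i)) - g (P i) = (\<Sum>j\<in>{m i..<m (Suc i)}. D j)" if "i < n" for i
    using sum_Suc_diff'[of "m i" "m (Suc i)" "\<lambda>j. g (r j)"] mle that m[of i] m[of "Suc i"]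
    unfolding D_def by simp
  have S1: "RSsum f g n P \<tau> = (\<Sum>i<n. \<Sum>j\<in>{m i..<m (Suc i)}. f (\<tau> i) * D j)"
    unfolding RSsum_def by (rule sum.cong) (auto simp: tel sum_distrib_left)
  have S2: "RSsum f g N r r = (\<Sum>i<n. \<Sum>j\<in>{m i..<m (Suc i)}. f (r j) * D j)"
    using block_sum[OF mle, of "\<lambda>j. f (r j) * D j"] m0 mn
    unfolding RSsum_def D_def by (simp add: atLeast0LessThan)
  have bound: "\<bar>f (\<tau> i) * D j - f (r j) * D j\<bar> \<le> \<epsilon> * (W (r (Suc j)) - W (r j))"
    if i: "i < n" and j: "j \<in> {m i..<m (Suc i)}" for i j
  proof -
    have jN: "j < N" using j m[of "Suc i"] i by auto
    have r1: "P i \<le> r j" using part_mono[OF r, of "m i" j] j jN m[of i] i by auto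
    have r2: "r (Suc j) \<le> P (Suc i)" using part_mono[OF r, of "Suc j" "m (Suc i)"] j m[of "Suc i"] i by auto
    have r3: "r j < r (Suc j)" using r jN unfolding is_partition_def by simp
    have tt: "P i \<le> \<tau> i" "\<tau> i \<le> P (Suc i)" "P (Suc i) - P i < \<delta>" using t i unfolding tagged_def by auto
    have pr: "p \<le> r j" "r (Suc j) \<le> q" using part_bounds[OF r, of j] part_bounds[OF r, of "Suc j"] jN by auto
    have f: "\<bar>f (\<tau> i) - f (r j)\<bar> \<le> \<epsilon>"
      using u tagged_in[OF t i] r1 r2 r3 tt pr unfolding ucont_def
      by (smt (verit))
    have gD: "\<bar>D j\<bar> \<le> W (r (Suc j)) - W (r j)"
      using c pr r3 unfolding ctrl_def D_def by (smt (verit))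
    have "\<bar>f (\<tau> i) * D j - f (r j) * D j\<bar> = \<bar>f (\<tau> i) - f (r j)\<bar> * \<bar>D j\<bar>"
      by (simp add: abs_mult[symmetric] left_diff_distrib)
    also have "\<dots> \<le> \<epsilon> * (W (r (Suc j)) - W (r j))"
      using f gD by (intro mult_mono) auto
    finally show ?thesis .
  qed
  have "\<bar>RSsum f g n P \<tau> - RSsum f g N r r\<bar>
      = \<bar>\<Sum>i<n. \<Sum>j\<in>{m i..<m (Suc i)}. f (\<tau> i) * D j - f (r j) * D j\<bar>"
    unfolding S1 S2 by (simp add: sum_subtractf)
  also have "\<dots> \<le> (\<Sum>i<n. \<Sum>j\<in>{m i..<m (Suc i)}. \<bar>f (\<tau> i) * D j - f (r j) * D j\<bar>)"
    by (rule order_trans[OF sum_abs]) (intro sum_mono sum_abs)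
  also have "\<dots> \<le> (\<Sum>i<n. \<Sum>j\<in>{m i..<m (Suc i)}. \<epsilon> * (W (r (Suc j)) - W (r j)))"
    by (intro sum_mono bound) auto
  also have "\<dots> = (\<Sum>j<N. \<epsilon> * (W (r (Suc j)) - W (r j)))"
    using block_sum[OF mle, of "\<lambda>j. \<epsilon> * (W (r (Suc j)) - W (r j))"] m0 mn by (simp add: atLeast0LessThan)
  also have "\<dots> = \<epsilon> * (W (r N) - W (r 0))"
    using sum_lessThan_telescope[of "\<lambda>j. W (r j)" N] by (simp add: sum_distrib_left[symmetric])
  also have "\<dots> = \<epsilon> * (W q - W p)" using r unfolding is_partition_def by simp
  finally show ?thesis .
qed

lemma common_refinement:
  assumes P: "is_partition p q n P" and Q: "is_partition p q n' Q"
  shows "\<exists>N r. is_partition p q N r \<and> (\<forall>i\<le>n. \<exists>j\<le>N. P i = r j) \<and> (\<forall>i\<le>n'. \<exists>j\<le>N. Q i = r j)"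
proof -
  define D where "D = P ` {..n} \<union> Q ` {..n'}"
  have fin: "finite D" unfolding D_def by simp
  obtain L where L: "sorted_wrt (<) L" "set L = D" "length L = card D"
    using finite_set_strict_sorted[OF fin] by blast
  have Dsub: "\<forall>x\<in>D. p \<le> x \<and> x \<le> q" unfolding D_def using part_bounds[OF P] part_bounds[OF Q] by auto
  have pD: "p \<in> D" "q \<in> D" unfolding D_def using P unfolding is_partition_def by auto
  have Lne: "L \<noteq> []" using L(2) pD by auto
  define N where "N = length L - 1"
  define r where "r j = L ! j" for j
  have lenL: "length L = Suc N" using Lne unfolding N_def by (cases L) auto
  have r0: "r 0 = p"
  proof -
    have "p \<in> set L" using pD L(2) by simp
    then obtain k where k: "k < length L" "L ! k = p" by (auto simp: in_set_conv_nth)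
    have "L ! 0 \<in> set L" using Lne by simp
    then have "L ! 0 \<in> D" using L(2) by simp
    then have "p \<le> L ! 0" using Dsub by auto
    moreover have "k \<noteq> 0 \<Longrightarrow> L ! 0 < L ! k" using sorted_wrt_nth_less[OF L(1), of 0 k] k by simp
    ultimately show ?thesis unfolding r_def using k by (cases "k = 0") force+
  qed
  have rN: "r N = q"
  proof -
    have "q \<in> set L" using pD L(2) by simp
    then obtain k where k: "k < length L" "L ! k = q" by (auto simp: in_set_conv_nth)
    have "L ! N \<in> set L" using lenL by simp
    then have "L ! N \<in> D" using L(2) by simp
    then have "L ! N \<le> q" using Dsub by auto
    moreover have "k \<noteq> N \<Longrightarrow> L ! k < L ! N" using sorted_wrt_nth_less[OF L(1), of k N] k lenL by simp
    ultimately show ?thesis unfolding r_def using k by (cases "k = N") force+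
  qed
  have rs: "\<forall>i<N. r i < r (Suc i)" unfolding r_def using sorted_wrt_nth_less[OF L(1)] lenL by simp
  have ip: "is_partition p q N r" unfolding is_partition_def using r0 rN rs by simp
  have mem: "\<exists>j\<le>N. x = r j" if "x \<in> D" for x
  proof -
    have "x \<in> set L" using that L(2) by simp
    then obtain k where "k < length L" "L ! k = x" by (auto simp: in_set_conv_nth)
    then show ?thesis unfolding r_def using lenL by (intro exI[of _ k]) auto
  qed
  show ?thesis using ip mem unfolding D_def by (intro exI[of _ N] exI[of _ r]) auto
qed

lemma pair_bound:
  assumes c: "ctrl g W p q" and u: "ucont f p q \<epsilon> \<delta>"
    and t1: "tagged p q n P \<tau> \<delta>" and t2: "tagged p q n' Q \<sigma> \<delta>"
  shows "\<bar>RSsum f g n P \<tau> - RSsum f g n' Q \<sigma>\<bar> \<le> 2 * \<epsilon> * (W q - W p)"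
proof -
  obtain N r where r: "is_partition p q N r" "\<forall>i\<le>n. \<exists>j\<le>N. P i = r j" "\<forall>i\<le>n'. \<exists>j\<le>N. Q i = r j"
    using common_refinement[of p q n P n' Q] t1 t2 unfolding tagged_def by blast
  have "\<bar>RSsum f g n P \<tau> - RSsum f g N r r\<bar> \<le> \<epsilon> * (W q - W p)"
    by (rule refine_bound[OF c r(1) t1 r(2) u])
  moreover have "\<bar>RSsum f g n' Q \<sigma> - RSsum f g N r r\<bar> \<le> \<epsilon> * (W q - W p)"
    by (rule refine_bound[OF c r(1) t2 r(3) u])
  ultimately show ?thesis by linarith
qed

lemma ucont_exists:
  assumes "continuous_on {p..q} f" "\<epsilon> > 0"
  shows "\<exists>\<delta>>0. ucont f p q \<epsilon> \<delta>"
proof -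
  have "uniformly_continuous_on {p..q} f" using assms(1) by (intro compact_uniformly_continuous) auto
  then obtain d where d: "d > 0" "\<forall>x\<in>{p..q}. \<forall>x'\<in>{p..q}. dist x' x < d \<longrightarrow> dist (f x') (f x) < \<epsilon>"
    unfolding uniformly_continuous_on_def using assms(2) by metis
  show ?thesis unfolding ucont_def
    by (intro exI[of _ d]) (use d in \<open>auto simp: dist_real_def intro: less_imp_le\<close>)
qed

lemma ctrl_nonneg: "ctrl g W p q \<Longrightarrow> p \<le> q \<Longrightarrow> W q - W p \<ge> 0"
  unfolding ctrl_def by (smt (verit))

lemma RS_exists_quant:
  assumes pq: "p \<le> q" and fc: "continuous_on {p..q} f" and c: "ctrl g W p q"
  shows "\<exists>I. \<forall>\<epsilon> \<delta>. \<delta> > 0 \<longrightarrow> ucont f p q \<epsilon> \<delta> \<longrightarrow>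
            (\<forall>n P \<tau>. tagged p q n P \<tau> \<delta> \<longrightarrow> \<bar>RSsum f g n P \<tau> - I\<bar> \<le> 2 * \<epsilon> * (W q - W p))"
proof -
  have "\<forall>k::nat. \<exists>x. tagged p q (fst x) (snd x) (snd x) (1 / Suc k)"
    using fine_exists[OF pq] by force
  from choice[OF this] obtain F where F: "\<forall>k. tagged p q (fst (F k)) (snd (F k)) (snd (F k)) (1 / Suc k)" by blast
  define nn where "nn k = fst (F k)" for k
  define PP where "PP k = snd (F k)" for k
  have PP: "\<And>k. tagged p q (nn k) (PP k) (PP k) (1 / Suc k)" using F unfolding nn_def PP_def by blast
  define S where "S k = RSsum f g (nn k) (PP k) (PP k)" for k
  have W0: "W q - W p \<ge> 0" using ctrl_nonneg[OF c pq] .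
  have fineK: "\<exists>K. \<forall>k\<ge>K. tagged p q (nn k) (PP k) (PP k) \<delta>" if "\<delta> > 0" for \<delta>
  proof -
    obtain K :: nat where K: "1 / \<delta> < K" using reals_Archimedean2 by blast
    have "1 / real (Suc k) < \<delta>" if "k \<ge> K" for k
    proof -
      have "1 / \<delta> < Suc k" using K that by linarith
      then show ?thesis using \<open>\<delta> > 0\<close> by (simp add: field_simps)
    qed
    then show ?thesis using PP tagged_mono less_imp_le by blast
  qed
  have "Cauchy S"
  proof (rule metric_CauchyI)
    fix e :: real assume e: "e > 0"
    define \<epsilon> where "\<epsilon> = e / (4 * (W q - W p + 1))"
    have \<epsilon>: "\<epsilon> > 0" unfolding \<epsilon>_def using e W0 by simp
    obtain \<delta> where \<delta>: "\<delta> > 0" "ucont f p q \<epsilon> \<delta>" using ucont_exists[OF fc \<epsilon>] by blast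
    obtain K where K: "\<forall>k\<ge>K. tagged p q (nn k) (PP k) (PP k) \<delta>" using fineK[OF \<delta>(1)] by blast
    have lt: "2 * \<epsilon> * (W q - W p) < e"
    proof -
      have "2 * \<epsilon> * (W q - W p) \<le> 2 * \<epsilon> * (W q - W p + 1)" using \<epsilon> by simp
      also have "\<dots> = e / 2" unfolding \<epsilon>_def using W0 by (simp add: field_simps)
      finally show ?thesis using e by simp
    qed
    show "\<exists>M. \<forall>m\<ge>M. \<forall>n\<ge>M. dist (S m) (S n) < e"
    proof (intro exI[of _ K] allI impI)
      fix m n assume mn: "K \<le> m" "K \<le> n"
      have "\<bar>S m - S n\<bar> \<le> 2 * \<epsilon> * (W q - W p)"
        unfolding S_def by (rule pair_bound[OF c \<delta>(2) K[rule_format, OF mn(1)] K[rule_format, OF mn(2)]])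
      then show "dist (S m) (S n) < e" unfolding dist_real_def using lt by linarith
    qed
  qed
  then obtain I where I: "S \<longlonglongrightarrow> I" using Cauchy_convergent_iff convergent_def by blast
  show ?thesis
  proof (intro exI[of _ I] allI impI)
    fix \<epsilon> \<delta> n P \<tau> assume \<delta>: "\<delta> > 0" and u: "ucont f p q \<epsilon> \<delta>" and t: "tagged p q n P \<tau> \<delta>"
    obtain K where K: "\<forall>k\<ge>K. tagged p q (nn k) (PP k) (PP k) \<delta>" using fineK[OF \<delta>] by blast
    have ev: "eventually (\<lambda>k. \<bar>RSsum f g n P \<tau> - S k\<bar> \<le> 2 * \<epsilon> * (W q - W p)) sequentially"
      unfolding eventually_sequentially S_def
      by (intro exI[of _ K] allI impI pair_bound[OF c u t] K[rule_format])
    have "(\<lambda>k. \<bar>RSsum f g n P \<tau> - S k\<bar>) \<longlonglongrightarrow> \<bar>RSsum f g n P \<tau> - I\<bar>"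
      by (intro tendsto_intros I)
    then show "\<bar>RSsum f g n P \<tau> - I\<bar> \<le> 2 * \<epsilon> * (W q - W p)"
      using ev by (rule tendsto_upperbound) simp
  qed
qed

lemma RS_quant_imp_has:
  assumes pq: "p \<le> q" and fc: "continuous_on {p..q} f" and c: "ctrl g W p q"
    and I: "\<forall>\<epsilon> \<delta>. \<delta> > 0 \<longrightarrow> ucont f p q \<epsilon> \<delta> \<longrightarrow>
            (\<forall>n P \<tau>. tagged p q n P \<tau> \<delta> \<longrightarrow> \<bar>RSsum f g n P \<tau> - I\<bar> \<le> 2 * \<epsilon> * (W q - W p))"
  shows "has_RS_integral f g p q I"
  unfolding has_RS_alt
proof (intro allI impI)
  fix e :: real assume e: "e > 0"
  have W0: "W q - W p \<ge> 0" using ctrl_nonneg[OF c pq] .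
  define \<epsilon> where "\<epsilon> = e / (4 * (W q - W p + 1))"
  have \<epsilon>: "\<epsilon> > 0" unfolding \<epsilon>_def using e W0 by simp
  obtain \<delta> where \<delta>: "\<delta> > 0" "ucont f p q \<epsilon> \<delta>" using ucont_exists[OF fc \<epsilon>] by blast
  have "2 * \<epsilon> * (W q - W p) < e"
  proof -
    have "2 * \<epsilon> * (W q - W p) \<le> 2 * \<epsilon> * (W q - W p + 1)" using \<epsilon> by simp
    also have "\<dots> = e / 2" unfolding \<epsilon>_def using W0 by (simp add: field_simps)
    finally show ?thesis using e by simp
  qed
  then show "\<exists>\<delta>>0. \<forall>n P \<tau>. tagged p q n P \<tau> \<delta> \<longrightarrow> \<bar>RSsum f g n P \<tau> - I\<bar> < e"
    using I \<delta> by (meson le_less_trans)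
qed



lemma ucont_sub: "ucont f a b \<epsilon> \<delta> \<Longrightarrow> u \<le> b \<Longrightarrow> ucont f a u \<epsilon> \<delta>"
  unfolding ucont_def by auto

lemma ctrl_sub: "ctrl g W a b \<Longrightarrow> u \<le> b \<Longrightarrow> ctrl g W a u"
  unfolding ctrl_def by auto

lemma indef_props:
  assumes ab: "a \<le> b" and fc: "continuous_on {a..b} f" and gc: "continuous_on {a..b} g"
    and c: "ctrl g W a b"
  shows "(\<forall>u\<in>{a..b}. has_RS_integral f g a u (RS_integral f g a u))
       \<and> continuous_on {a..b} (\<lambda>u. RS_integral f g a u)"
proof -
  define F where "F u = RS_integral f g a u" for u
  have Q: "has_RS_integral f g a u (F u) \<and> (\<forall>\<epsilon> \<delta>. \<delta> > 0 \<longrightarrow> ucont f a u \<epsilon> \<delta> \<longrightarrow>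
            (\<forall>n P \<tau>. tagged a u n P \<tau> \<delta> \<longrightarrow> \<bar>RSsum f g n P \<tau> - F u\<bar> \<le> 2 * \<epsilon> * (W u - W a)))"
    if u: "u \<in> {a..b}" for u
  proof -
    have au: "a \<le> u" "u \<le> b" using u by auto
    have fcu: "continuous_on {a..u} f" using au by (intro continuous_on_subset[OF fc]) auto
    have cu: "ctrl g W a u" using ctrl_sub[OF c au(2)] .
    obtain I where I: "\<forall>\<epsilon> \<delta>. \<delta> > 0 \<longrightarrow> ucont f a u \<epsilon> \<delta> \<longrightarrow>
            (\<forall>n P \<tau>. tagged a u n P \<tau> \<delta> \<longrightarrow> \<bar>RSsum f g n P \<tau> - I\<bar> \<le> 2 * \<epsilon> * (W u - W a))"
      using RS_exists_quant[OF au(1) fcu cu] by blast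
    have h: "has_RS_integral f g a u I" by (rule RS_quant_imp_has[OF au(1) fcu cu I])
    have "F u = I" unfolding F_def by (rule RS_integral_eq[OF h au(1)])
    then show ?thesis using h I by simp
  qed
  have V0: "W u - W a \<le> W b - W a" if "u \<in> {a..b}" for u
  proof -
    have "\<bar>g b - g u\<bar> \<le> W b - W u" using c that unfolding ctrl_def by auto
    then show ?thesis by linarith
  qed
  have V0pos: "W b - W a \<ge> 0" using ctrl_nonneg[OF c ab] .
  obtain M where M: "\<forall>x\<in>{a..b}. \<bar>f x\<bar> \<le> M"
    using compact_imp_bounded[OF compact_continuous_image[OF fc compact_Icc]] unfolding bounded_real by auto
  have M0: "M \<ge> 0"
  proof -
    have "\<bar>f a\<bar> \<le> M" using M ab by auto
    then show ?thesis by linarith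
  qed
  have step: "\<bar>F u' - F u\<bar> \<le> 4 * \<epsilon> * (W b - W a) + M * \<bar>g u' - g u\<bar>"
    if uu: "a \<le> u" "u < u'" "u' \<le> b" and d: "\<delta> > 0" "ucont f a b \<epsilon> \<delta>" "u' - u < \<delta>" for u u' \<epsilon> \<delta>
  proof -
    obtain n P where P: "tagged a u n P P \<delta>" using fine_exists[OF uu(1) d(1)] by blast
    have Pp: "is_partition a u n P" using P unfolding tagged_def by simp
    define P' where "P' = P(Suc n := u')"
    have Pp': "is_partition a u' (Suc n) P'" unfolding P'_def by (rule part_append[OF Pp uu(2)])
    have Pn: "P n = u" using Pp unfolding is_partition_def by simp
    have t': "tagged a u' (Suc n) P' P' \<delta>"
      unfolding tagged_def using Pp' P d(3) Pn uu(2) unfolding P'_def tagged_def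
      by (auto simp: less_Suc_eq)
    have sum': "RSsum f g (Suc n) P' P' = RSsum f g n P P + f u * (g u' - g u)"
      unfolding RSsum_def P'_def using Pn by (auto intro!: sum.cong)
    have e0: "\<epsilon> \<ge> 0"
    proof -
      have ub: "u \<le> b" using uu by linarith
      have "\<bar>f u - f u\<bar> \<le> \<epsilon>" using d(2)[unfolded ucont_def, rule_format, of u u] uu(1) ub d(1) by simp
      then show ?thesis by simp
    qed
    have b1: "\<bar>RSsum f g n P P - F u\<bar> \<le> 2 * \<epsilon> * (W b - W a)"
    proof -
      have "\<bar>RSsum f g n P P - F u\<bar> \<le> 2 * \<epsilon> * (W u - W a)"
      proof -
        have "u \<in> {a..b}" using uu by auto
        from conjunct2[OF Q[OF this], rule_format, OF d(1) ucont_sub[OF d(2)] P] uu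
        show ?thesis by linarith
      qed
      also have "\<dots> \<le> 2 * \<epsilon> * (W b - W a)" using V0[of u] uu e0 by (intro mult_left_mono) auto
      finally show ?thesis .
    qed
    have b2: "\<bar>RSsum f g (Suc n) P' P' - F u'\<bar> \<le> 2 * \<epsilon> * (W b - W a)"
    proof -
      have "\<bar>RSsum f g (Suc n) P' P' - F u'\<bar> \<le> 2 * \<epsilon> * (W u' - W a)"
      proof -
        have "u' \<in> {a..b}" using uu by auto
        from conjunct2[OF Q[OF this], rule_format, OF d(1) ucont_sub[OF d(2)] t'] uu
        show ?thesis by linarith
      qed
      also have "\<dots> \<le> 2 * \<epsilon> * (W b - W a)" using V0[of u'] uu e0 by (intro mult_left_mono) auto
      finally show ?thesis .
    qed
    have "\<bar>f u * (g u' - g u)\<bar> \<le> M * \<bar>g u' - g u\<bar>"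
      unfolding abs_mult using M uu by (intro mult_right_mono) auto
    then show ?thesis using b1 b2 sum' by linarith
  qed
  have "continuous_on {a..b} F"
    unfolding continuous_on_iff
  proof (intro ballI allI impI)
    fix x e :: real assume x: "x \<in> {a..b}" and e: "e > 0"
    define \<epsilon> where "\<epsilon> = e / (8 * (W b - W a + 1))"
    have \<epsilon>: "\<epsilon> > 0" unfolding \<epsilon>_def using e V0pos by simp
    obtain \<delta> where \<delta>: "\<delta> > 0" "ucont f a b \<epsilon> \<delta>" using ucont_exists[OF fc \<epsilon>] by blast
    have e2: "e / (2 * (M + 1)) > 0" using e M0 by simp
    obtain dg where dg: "dg > 0" "\<forall>x'\<in>{a..b}. dist x' x < dg \<longrightarrow> dist (g x') (g x) < e / (2 * (M + 1))"
      using gc x e2 unfolding continuous_on_iff by blast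
    have A: "4 * \<epsilon> * (W b - W a) \<le> e / 2"
    proof -
      have "4 * \<epsilon> * (W b - W a) \<le> 4 * \<epsilon> * (W b - W a + 1)" using \<epsilon> by simp
      also have "\<dots> = e / 2" unfolding \<epsilon>_def using V0pos by (simp add: field_simps)
      finally show ?thesis .
    qed
    have B: "M * \<bar>g x' - g x\<bar> < e / 2" if "x' \<in> {a..b}" "dist x' x < dg" for x'
    proof -
      have "\<bar>g x' - g x\<bar> < e / (2 * (M + 1))" using dg that by (simp add: dist_real_def)
      then have "M * \<bar>g x' - g x\<bar> \<le> M * (e / (2 * (M + 1)))" using M0 by (intro mult_left_mono) auto
      also have "\<dots> < e / 2" using M0 e by (simp add: field_simps)
      finally show ?thesis .
    qed
    show "\<exists>d>0. \<forall>x'\<in>{a..b}. dist x' x < d \<longrightarrow> dist (F x') (F x) < e"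
    proof (intro exI[of _ "min \<delta> dg"] conjI ballI impI)
      fix x' assume x': "x' \<in> {a..b}" and dx: "dist x' x < min \<delta> dg"
      have dd: "\<bar>x' - x\<bar> < \<delta>" "dist x' x < dg" using dx by (auto simp: dist_real_def)
      consider "x' = x" | "x < x'" | "x' < x" by linarith
      then show "dist (F x') (F x) < e"
      proof cases
        case 1 then show ?thesis using e by simp
      next
        case 2
        have "\<bar>F x' - F x\<bar> \<le> 4 * \<epsilon> * (W b - W a) + M * \<bar>g x' - g x\<bar>"
          using step[of x x' \<delta> \<epsilon>] 2 x x' \<delta> dd by auto
        then show ?thesis using A B[OF x' dd(2)] by (simp add: dist_real_def)
      next
        case 3
        have "\<bar>F x - F x'\<bar> \<le> 4 * \<epsilon> * (W b - W a) + M * \<bar>g x - g x'\<bar>"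
          using step[of x' x \<delta> \<epsilon>] 3 x x' \<delta> dd by auto
        then show ?thesis using A B[OF x' dd(2)] by (simp add: dist_real_def abs_minus_commute)
      qed
    qed (use \<delta> dg in auto)
  qed
  then show ?thesis using Q unfolding F_def by blast
qed



lemma ctrl_gamma:
  fixes \<gamma> :: "real \<Rightarrow> 'v::euclidean_space"
  assumes "bounded_variation_on \<gamma> a b"
  shows "ctrl (\<lambda>v. \<gamma> v \<bullet> e) (\<lambda>v. norm e * path_length \<gamma> a v) a b"
  unfolding ctrl_def
proof (intro allI impI)
  fix x y assume xy: "a \<le> x" "x \<le> y" "y \<le> b"
  have "\<bar>\<gamma> y \<bullet> e - \<gamma> x \<bullet> e\<bar> = \<bar>(\<gamma> y - \<gamma> x) \<bullet> e\<bar>" by (simp add: inner_diff_left)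
  also have "\<dots> \<le> norm (\<gamma> y - \<gamma> x) * norm e" by (rule Cauchy_Schwarz_ineq2)
  also have "\<dots> \<le> (path_length \<gamma> a y - path_length \<gamma> a x) * norm e"
    using var_step[OF assms xy] by (intro mult_right_mono) auto
  finally show "\<bar>\<gamma> y \<bullet> e - \<gamma> x \<bullet> e\<bar> \<le> norm e * path_length \<gamma> a y - norm e * path_length \<gamma> a x"
    by (simp add: algebra_simps)
qed

lemma sig_props:
  fixes \<gamma> :: "real \<Rightarrow> 'v::euclidean_space"
  assumes gc: "continuous_on {a..b} \<gamma>" and bv: "bounded_variation_on \<gamma> a b" and ab: "a \<le> b"
  shows "continuous_on {a..b} (sig_coord \<gamma> a w)
     \<and> (\<forall>e. \<forall>u\<in>{a..b}. has_RS_integral (sig_coord \<gamma> a w) (\<lambda>v. \<gamma> v \<bullet> e) a u (sig_coord \<gamma> a (e # w) u))"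
proof -
  have gce: "continuous_on {a..b} (\<lambda>v. \<gamma> v \<bullet> e)" for e using gc by (intro continuous_intros)
  have eq: "sig_coord \<gamma> a (e # w') u = RS_integral (sig_coord \<gamma> a w') (\<lambda>v. \<gamma> v \<bullet> e) a u" for e w' u
    by (simp only: sig_coord.simps)
  have step: "(\<forall>e. \<forall>u\<in>{a..b}. has_RS_integral (sig_coord \<gamma> a w') (\<lambda>v. \<gamma> v \<bullet> e) a u (sig_coord \<gamma> a (e # w') u))
     \<and> (\<forall>e. continuous_on {a..b} (sig_coord \<gamma> a (e # w')))"
    if c: "continuous_on {a..b} (sig_coord \<gamma> a w')" for w'
  proof -
    have "(\<forall>u\<in>{a..b}. has_RS_integral (sig_coord \<gamma> a w') (\<lambda>v. \<gamma> v \<bullet> e) a u (RS_integral (sig_coord \<gamma> a w') (\<lambda>v. \<gamma> v \<bullet> e) a u))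
       \<and> continuous_on {a..b} (\<lambda>u. RS_integral (sig_coord \<gamma> a w') (\<lambda>v. \<gamma> v \<bullet> e) a u)" for e
      by (rule indef_props[OF ab c gce ctrl_gamma[OF bv]])
    then show ?thesis unfolding eq by blast
  qed
  have c: "continuous_on {a..b} (sig_coord \<gamma> a w)"
  proof (induction w)
    case Nil then show ?case by simp
  next
    case (Cons e w) then show ?case using step by blast
  qed
  show ?thesis using c step[OF c] by blast
qed

lemma sig_scale:
  fixes \<gamma> :: "real \<Rightarrow> 'v::euclidean_space"
  assumes gc: "continuous_on {a..b} \<gamma>" and bv: "bounded_variation_on \<gamma> a b" and ab: "a \<le> b"
  shows "u \<in> {a..b} \<Longrightarrow> sig_coord (\<lambda>v. x *\<^sub>R \<gamma> v) a w u = x ^ length w * sig_coord \<gamma> a w u"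
proof (induction w arbitrary: u)
  case Nil then show ?case by simp
next
  case (Cons e w)
  have h: "has_RS_integral (sig_coord \<gamma> a w) (\<lambda>v. \<gamma> v \<bullet> e) a u (sig_coord \<gamma> a (e # w) u)"
    using conjunct2[OF sig_props[OF gc bv ab, of w]] Cons.prems by blast
  have h2: "has_RS_integral (\<lambda>v. x ^ length w * sig_coord \<gamma> a w v) (\<lambda>v. x * (\<gamma> v \<bullet> e)) a u
     (x ^ length w * x * sig_coord \<gamma> a (e # w) u)" by (rule RS_scale[OF h])
  have h3: "has_RS_integral (sig_coord (\<lambda>v. x *\<^sub>R \<gamma> v) a w) (\<lambda>v. (x *\<^sub>R \<gamma> v) \<bullet> e) a u
     (x ^ length w * x * sig_coord \<gamma> a (e # w) u)"
    by (rule RS_cong[OF h2]) (use Cons.IH Cons.prems in auto)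
  have "sig_coord (\<lambda>v. x *\<^sub>R \<gamma> v) a (e # w) u = x ^ length w * x * sig_coord \<gamma> a (e # w) u"
    using RS_integral_eq[OF h3] Cons.prems by simp
  then show ?case by (simp add: algebra_simps)
qed

lemma words_finite: "finite (words k :: 'v::euclidean_space list set)"
proof -
  have "words k = {xs. set xs \<subseteq> (Basis :: 'v set) \<and> length xs = k}" unfolding words_def by auto
  then show ?thesis using finite_lists_length_eq[OF finite_Basis] by simp
qed

lemma words_0: "words 0 = {[]}" unfolding words_def by auto

lemma words_Suc: "words (Suc k) = (\<lambda>x. fst x # snd x) ` (Basis \<times> words k)"
proof
  show "words (Suc k) \<subseteq> (\<lambda>x. fst x # snd x) ` (Basis \<times> words k)"
  proof
    fix w assume "w \<in> words (Suc k)"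
    then obtain e w' where "w = e # w'" "e \<in> Basis" "w' \<in> words k" unfolding words_def
      by (cases w) auto
    then show "w \<in> (\<lambda>x. fst x # snd x) ` (Basis \<times> words k)" by (intro image_eqI[of _ _ "(e, w')"]) auto
  qed
qed (auto simp: words_def)

lemma words_inj: "inj_on (\<lambda>x. fst x # snd x) A"
  by (auto simp: inj_on_def prod_eq_iff)

lemma L2_sum_le: fixes h :: "nat \<Rightarrow> 'b \<Rightarrow> real" and n :: nat shows "L2_set (\<lambda>x. \<Sum>i<n. h i x) A \<le> (\<Sum>i<n. L2_set (h i) A)"
proof (induction n)
  case 0 then show ?case by (simp add: L2_set_def)
next
  case (Suc n)
  have "L2_set (\<lambda>x. \<Sum>i<Suc n. h i x) A = L2_set (\<lambda>x. (\<Sum>i<n. h i x) + h n x) A" by simp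
  also have "\<dots> \<le> L2_set (\<lambda>x. \<Sum>i<n. h i x) A + L2_set (h n) A" by (rule L2_set_triangle_ineq)
  also have "\<dots> \<le> (\<Sum>i<Suc n. L2_set (h i) A)" using Suc by simp
  finally show ?case .
qed

lemma L2_prod:
  assumes "finite A" "finite B"
  shows "L2_set (\<lambda>x. c (snd x) * d (fst x)) (B \<times> A) = L2_set c A * L2_set d B"
proof -
  have "(\<Sum>x\<in>B \<times> A. (c (snd x) * d (fst x))\<^sup>2) = (\<Sum>e\<in>B. \<Sum>w\<in>A. (c w * d e)\<^sup>2)"
    by (simp add: sum.cartesian_product case_prod_beta)
  also have "\<dots> = (\<Sum>w\<in>A. (c w)\<^sup>2) * (\<Sum>e\<in>B. (d e)\<^sup>2)"
    by (simp add: sum_product power_mult_distrib mult.commute) (rule sum.swap)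
  finally show ?thesis unfolding L2_set_def by (simp add: real_sqrt_mult)
qed

lemma L2_basis: "L2_set (\<lambda>e. d \<bullet> e) Basis = norm d"
  unfolding L2_set_def norm_eq_sqrt_inner using euclidean_inner[of d d]
  by (simp add: power2_eq_square)

lemma pow_ineq:
  fixes y z :: real
  assumes "0 \<le> y" "y \<le> z"
  shows "y ^ k / fact k * (z - y) \<le> z ^ Suc k / fact (Suc k) - y ^ Suc k / fact (Suc k)"
proof -
  have "(\<Sum>p<Suc k. y ^ p * y ^ (k - p)) \<le> (\<Sum>p<Suc k. z ^ p * y ^ (k - p))"
    using assms by (intro sum_mono mult_right_mono power_mono) auto
  moreover have "(\<Sum>p<Suc k. y ^ p * y ^ (k - p)) = real (Suc k) * y ^ k"
    by (simp add: power_add[symmetric])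
  ultimately have "real (Suc k) * y ^ k * (z - y) \<le> (z - y) * (\<Sum>p<Suc k. z ^ p * y ^ (k - p))"
    using assms by (simp add: mult.commute mult_left_mono)
  also have "\<dots> = z ^ Suc k - y ^ Suc k" by (rule diff_power_eq_sum[symmetric])
  finally have *: "real (Suc k) * y ^ k * (z - y) \<le> z ^ Suc k - y ^ Suc k" .
  have fs: "(fact (Suc k) :: real) = real (Suc k) * fact k" by simp
  have "y ^ k / fact k * (z - y) = real (Suc k) * (y ^ k * (z - y)) / (real (Suc k) * fact k)"
    by simp
  also have "\<dots> = real (Suc k) * y ^ k * (z - y) / fact (Suc k)" unfolding fs by (simp add: mult.assoc)
  finally have "y ^ k / fact k * (z - y) = real (Suc k) * y ^ k * (z - y) / fact (Suc k)" .
  also have "\<dots> \<le> (z ^ Suc k - y ^ Suc k) / fact (Suc k)"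
    using * by (intro divide_right_mono) auto
  finally show ?thesis by (simp add: diff_divide_distrib)
qed

lemma finite_delta:
  assumes "finite A" "\<forall>x\<in>A. \<exists>\<delta>>0. \<forall>n P \<tau>. tagged p q n P \<tau> \<delta> \<longrightarrow> R x n P \<tau>"
  shows "\<exists>\<delta>>0. \<forall>x\<in>A. \<forall>n P \<tau>. tagged p q n P \<tau> \<delta> \<longrightarrow> R x n P \<tau>"
  using assms
proof (induction A rule: finite_induct)
  case empty then show ?case by (intro exI[of _ 1]) auto
next
  case (insert x A)
  obtain d1 where d1: "d1 > 0" "\<forall>y\<in>A. \<forall>n P \<tau>. tagged p q n P \<tau> d1 \<longrightarrow> R y n P \<tau>" using insert by auto
  obtain d2 where d2: "d2 > 0" "\<forall>n P \<tau>. tagged p q n P \<tau> d2 \<longrightarrow> R x n P \<tau>" using insert.prems by auto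
  show ?case
  proof (intro exI[of _ "min d1 d2"] conjI ballI allI impI)
    fix y n P \<tau> assume y: "y \<in> insert x A" and t: "tagged p q n P \<tau> (min d1 d2)"
    have "tagged p q n P \<tau> d1" "tagged p q n P \<tau> d2" using t tagged_mono by fastforce+
    then show "R y n P \<tau>" using y d1 d2 by auto
  qed (use d1 d2 in auto)
qed

lemma level_bound:
  fixes \<gamma> :: "real \<Rightarrow> 'v::euclidean_space"
  assumes gc: "continuous_on {a..b} \<gamma>" and bv: "bounded_variation_on \<gamma> a b" and ab: "a \<le> b"
  shows "u \<in> {a..b} \<Longrightarrow> L2_set (\<lambda>w. sig_coord \<gamma> a w u) (words k) \<le> path_length \<gamma> a u ^ k / fact k"
proof (induction k arbitrary: u)
  case 0 then show ?case by (simp add: words_0 L2_set_def)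
next
  case (Suc k)
  define V where "V = path_length \<gamma> a"
  have tab: "a \<le> u" "u \<le> b" using Suc.prems by auto
  define A where "A = (Basis :: 'v set) \<times> (words k :: 'v list set)"
  have finA: "finite A" unfolding A_def by (intro finite_cartesian_product finite_Basis words_finite)
  define I where "I x = sig_coord \<gamma> a (fst x # snd x) u" for x :: "'v \<times> 'v list"
  have lhs: "L2_set (\<lambda>w. sig_coord \<gamma> a w u) (words (Suc k)) = L2_set I A"
    unfolding L2_set_def words_Suc A_def I_def by (subst sum.reindex[OF words_inj]) (simp add: o_def)
  have "L2_set I A \<le> V u ^ Suc k / fact (Suc k) + e" if e: "e > 0" for e
  proof -
    define \<epsilon> where "\<epsilon> = e / (real (card A) + 1)"
    have \<epsilon>: "\<epsilon> > 0" unfolding \<epsilon>_def using e by (simp add: add_nonneg_pos)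
    have "\<forall>x\<in>A. \<exists>\<delta>>0. \<forall>n P \<tau>. tagged a u n P \<tau> \<delta> \<longrightarrow>
        \<bar>RSsum (sig_coord \<gamma> a (snd x)) (\<lambda>v. \<gamma> v \<bullet> fst x) n P \<tau> - I x\<bar> < \<epsilon>"
    proof
      fix x assume "x \<in> A"
      have "has_RS_integral (sig_coord \<gamma> a (snd x)) (\<lambda>v. \<gamma> v \<bullet> fst x) a u (I x)"
        unfolding I_def using conjunct2[OF sig_props[OF gc bv ab, of "snd x"]] Suc.prems by blast
      then show "\<exists>\<delta>>0. \<forall>n P \<tau>. tagged a u n P \<tau> \<delta> \<longrightarrow>
        \<bar>RSsum (sig_coord \<gamma> a (snd x)) (\<lambda>v. \<gamma> v \<bullet> fst x) n P \<tau> - I x\<bar> < \<epsilon>"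
        unfolding has_RS_alt using \<epsilon> by blast
    qed
    from finite_delta[OF finA this] obtain \<delta> where \<delta>: "\<delta> > 0" "\<forall>x\<in>A. \<forall>n P \<tau>. tagged a u n P \<tau> \<delta> \<longrightarrow>
        \<bar>RSsum (sig_coord \<gamma> a (snd x)) (\<lambda>v. \<gamma> v \<bullet> fst x) n P \<tau> - I x\<bar> < \<epsilon>" by blast
    obtain n P where P: "tagged a u n P P \<delta>" using fine_exists[OF tab(1) \<delta>(1)] by blast
    have Pp: "is_partition a u n P" using P unfolding tagged_def by simp
    have Pin: "P i \<in> {a..b}" if "i \<le> n" for i using part_bounds[OF Pp that] tab by auto
    define S where "S x = RSsum (sig_coord \<gamma> a (snd x)) (\<lambda>v. \<gamma> v \<bullet> fst x) n P P" for x :: "'v \<times> 'v list"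
    define d where "d i = \<gamma> (P (Suc i)) - \<gamma> (P i)" for i
    have Sx: "S x = (\<Sum>i<n. sig_coord \<gamma> a (snd x) (P i) * (d i \<bullet> fst x))" for x
      unfolding S_def RSsum_def d_def by (simp add: inner_diff_left)
    have "L2_set I A = L2_set (\<lambda>x. (I x - S x) + S x) A" by simp
    also have "\<dots> \<le> L2_set (\<lambda>x. I x - S x) A + L2_set S A" by (rule L2_set_triangle_ineq)
    also have "L2_set (\<lambda>x. I x - S x) A \<le> e"
    proof -
      have "L2_set (\<lambda>x. I x - S x) A \<le> (\<Sum>x\<in>A. \<bar>I x - S x\<bar>)" by (rule L2_set_le_sum_abs)
      also have "\<dots> \<le> (\<Sum>x\<in>A. \<epsilon>)"
        using \<delta>(2) P unfolding S_def by (intro sum_mono) (force simp: abs_minus_commute intro: less_imp_le)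
      also have "\<dots> = real (card A) * \<epsilon>" by simp
      also have "\<dots> \<le> e" unfolding \<epsilon>_def using e by (simp add: field_simps)
      finally show ?thesis .
    qed
    also have "L2_set S A \<le> V u ^ Suc k / fact (Suc k)"
    proof -
      have "L2_set S A \<le> (\<Sum>i<n. L2_set (\<lambda>x. sig_coord \<gamma> a (snd x) (P i) * (d i \<bullet> fst x)) A)"
        unfolding Sx by (rule L2_sum_le)
      also have "\<dots> = (\<Sum>i<n. L2_set (\<lambda>w. sig_coord \<gamma> a w (P i)) (words k) * norm (d i))"
        unfolding A_def
      proof (rule sum.cong[OF refl])
        fix i
        show "L2_set (\<lambda>x. sig_coord \<gamma> a (snd x) (P i) * (d i \<bullet> fst x)) (Basis \<times> words k) =
          L2_set (\<lambda>w. sig_coord \<gamma> a w (P i)) (words k) * norm (d i)"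
          using L2_prod[OF words_finite[of k] finite_Basis, of "\<lambda>w. sig_coord \<gamma> a w (P i)" "\<lambda>e. d i \<bullet> e"]
          by (simp add: L2_basis)
      qed
      also have "\<dots> \<le> (\<Sum>i<n. V (P i) ^ k / fact k * (V (P (Suc i)) - V (P i)))"
      proof (rule sum_mono)
        fix i assume i: "i \<in> {..<n}"
        have a1: "P i \<in> {a..b}" "P (Suc i) \<in> {a..b}" using Pin i by auto
        have le: "P i \<le> P (Suc i)" using Pp i unfolding is_partition_def by (simp add: less_imp_le)
        have "norm (d i) \<le> V (P (Suc i)) - V (P i)"
          using var_step[OF bv _ le] a1 unfolding d_def V_def by auto
        moreover have "L2_set (\<lambda>w. sig_coord \<gamma> a w (P i)) (words k) \<le> V (P i) ^ k / fact k"
          using Suc.IH[OF a1(1)] unfolding V_def .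
        ultimately show "L2_set (\<lambda>w. sig_coord \<gamma> a w (P i)) (words k) * norm (d i)
            \<le> V (P i) ^ k / fact k * (V (P (Suc i)) - V (P i))"
          by (intro mult_mono') auto
      qed
      also have "\<dots> \<le> (\<Sum>i<n. V (P (Suc i)) ^ Suc k / fact (Suc k) - V (P i) ^ Suc k / fact (Suc k))"
      proof (rule sum_mono)
        fix i assume i: "i \<in> {..<n}"
        have a1: "P i \<in> {a..b}" "P (Suc i) \<in> {a..b}" using Pin i by auto
        have le: "P i \<le> P (Suc i)" using Pp i unfolding is_partition_def by (simp add: less_imp_le)
        have "V (P i) \<le> V (P (Suc i))" using var_step[OF bv _ le] a1 unfolding V_def
          by (smt (verit) atLeastAtMost_iff norm_ge_zero)
        moreover have "V (P i) \<ge> 0" using var_nonneg[OF bv] a1 unfolding V_def by auto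
        ultimately show "V (P i) ^ k / fact k * (V (P (Suc i)) - V (P i))
            \<le> V (P (Suc i)) ^ Suc k / fact (Suc k) - V (P i) ^ Suc k / fact (Suc k)"
          by (intro pow_ineq)
      qed
      also have "\<dots> = V (P n) ^ Suc k / fact (Suc k) - V (P 0) ^ Suc k / fact (Suc k)"
        by (rule sum_lessThan_telescope[of "\<lambda>i. V (P i) ^ Suc k / fact (Suc k)"])
      also have "\<dots> = V u ^ Suc k / fact (Suc k)"
        using Pp unfolding is_partition_def V_def by (simp add: var_zero)
      finally show ?thesis .
    qed
    finally show ?thesis by simp
  qed
  then have "L2_set I A \<le> V u ^ Suc k / fact (Suc k)" by (rule field_le_epsilon)
  then show ?case unfolding lhs V_def .
qed



lemma summable_besselish:
  fixes y :: real
  assumes "y \<ge> 0"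
  shows "summable (\<lambda>m. y ^ m / (fact m * fact (m + k)))"
proof (rule summable_comparison_test'[OF summable_exp[of y], of 0])
  fix m :: nat
  have f1: "(1::real) \<le> fact (m + k)" by simp
  have "y ^ m / (fact m * fact (m + k)) \<le> y ^ m / (fact m * 1)"
    using assms f1 by (intro divide_left_mono mult_left_mono) auto
  then show "norm (y ^ m / (fact m * fact (m + k))) \<le> inverse (fact m) * y ^ m"
    using assms by (simp add: field_simps)
qed

lemma diffs_iter:
  fixes c :: "nat \<Rightarrow> real"
  shows "(diffs ^^ k) c l = fact (l + k) / fact l * c (l + k)"
proof (induction k arbitrary: l)
  case 0 then show ?case by simp
next
  case (Suc k)
  have "(diffs ^^ Suc k) c l = of_nat (Suc l) * (diffs ^^ k) c (Suc l)"
    by (simp add: diffs_def)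
  also have "\<dots> = of_nat (Suc l) * (fact (Suc l + k) / fact (Suc l) * c (Suc l + k))" using Suc by simp
  also have "\<dots> = fact (l + Suc k) / fact l * c (l + Suc k)"
  proof -
    have e: "Suc l + k = l + Suc k" by simp
    have f: "(fact (Suc l)::real) = of_nat (Suc l) * fact l" by (rule fact_Suc)
    have g: "N \<noteq> 0 \<Longrightarrow> G \<noteq> 0 \<Longrightarrow> N * (X / (N * G) * C) = X / G * (C::real)" for N G X C
      by (simp add: field_simps)
    show ?thesis unfolding e f by (rule g) auto
  qed
  finally show ?case .
qed

lemma power_series_derivs:
  fixes c :: "nat \<Rightarrow> real"
  assumes sm: "\<And>y. summable (\<lambda>n. c n * y ^ n)"
  shows "(\<forall>y. summable (\<lambda>n. (diffs ^^ k) c n * y ^ n))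
       \<and> (deriv ^^ k) (\<lambda>x. \<Sum>n. c n * x ^ n) = (\<lambda>x. \<Sum>n. (diffs ^^ k) c n * x ^ n)"
proof (induction k)
  case 0 then show ?case using sm by simp
next
  case (Suc k)
  have s: "\<And>y. summable (\<lambda>n. (diffs ^^ k) c n * y ^ n)" using Suc by blast
  have d: "((\<lambda>x. \<Sum>n. (diffs ^^ k) c n * x ^ n) has_field_derivative (\<Sum>n. diffs ((diffs ^^ k) c) n * x ^ n)) (at x)" for x
    by (rule termdiffs_strong_converges_everywhere[OF s])
  have "(deriv ^^ Suc k) (\<lambda>x. \<Sum>n. c n * x ^ n) = deriv (\<lambda>x. \<Sum>n. (diffs ^^ k) c n * x ^ n)"
    using Suc by simp
  also have "\<dots> = (\<lambda>x. \<Sum>n. diffs ((diffs ^^ k) c) n * x ^ n)"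
    using d by (intro ext DERIV_imp_deriv)
  finally show ?case using termdiff_converges_all[OF s] by simp
qed

lemma coeff_bound:
  fixes \<gamma> \<sigma> :: "real \<Rightarrow> 'v::euclidean_space"
  assumes "continuous_on {a..b} \<gamma>" "bounded_variation_on \<gamma> a b"
    "continuous_on {a..b} \<sigma>" "bounded_variation_on \<sigma> a b"
    "s \<in> {a..b}" "t \<in> {a..b}"
  shows "\<bar>hs_inner k (sig_level \<gamma> a k s) (sig_level \<sigma> a k t)\<bar>
     \<le> path_length \<gamma> a s ^ k / fact k * (path_length \<sigma> a t ^ k / fact k)"
proof -
  have ab: "a \<le> b" using assms(5) by simp
  have "hs_inner k (sig_level \<gamma> a k s) (sig_level \<sigma> a k t)
      = (\<Sum>w\<in>words k. sig_coord \<gamma> a w s * sig_coord \<sigma> a w t)"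
    unfolding hs_inner_def sig_level_def by simp
  then have "\<bar>hs_inner k (sig_level \<gamma> a k s) (sig_level \<sigma> a k t)\<bar>
      \<le> (\<Sum>w\<in>words k. \<bar>sig_coord \<gamma> a w s\<bar> * \<bar>sig_coord \<sigma> a w t\<bar>)"
    by (simp add: sum_abs[THEN order_trans] abs_mult)
  also have "\<dots> \<le> L2_set (\<lambda>w. sig_coord \<gamma> a w s) (words k) * L2_set (\<lambda>w. sig_coord \<sigma> a w t) (words k)"
    by (rule L2_set_mult_ineq)
  also have "\<dots> \<le> path_length \<gamma> a s ^ k / fact k * (path_length \<sigma> a t ^ k / fact k)"
    using level_bound[OF assms(1,2) ab assms(5)] level_bound[OF assms(3,4) ab assms(6)]
    by (intro mult_mono') auto
  finally show ?thesis .
qed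

theorem mainTheorem13:
  fixes \<gamma> \<sigma> :: "real \<Rightarrow> 'v::euclidean_space"
    and a b s t :: real
    and f :: "real \<Rightarrow> real"
  assumes "continuous_on {a..b} \<gamma>" and "bounded_variation_on \<gamma> a b"
    and "continuous_on {a..b} \<sigma>" and "bounded_variation_on \<sigma> a b"
    and "s \<in> {a..b}" and "t \<in> {a..b}"
    and f_def: "f = (\<lambda>x. sig_kernel (\<lambda>u. x *\<^sub>R \<gamma> u) \<sigma> a s t)"
  shows "(\<forall>k x. ((deriv ^^ k) f has_real_derivative (deriv ^^ Suc k) f x) (at x))
       \<and> (\<forall>k x. (\<lambda>l. x ^ l * (fact (l + k) / fact l)
                      * hs_inner (l + k) (sig_level \<gamma> a (l + k) s) (sig_level \<sigma> a (l + k) t))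
                 sums ((deriv ^^ k) f x))
       \<and> (\<forall>k x. x \<noteq> 0 \<longrightarrow>
            \<bar>(deriv ^^ k) f x\<bar>
              \<le> sqrt (path_length \<gamma> a s) ^ k * sqrt (path_length \<sigma> a t) ^ k / sqrt \<bar>x\<bar> ^ k
                 * bessel_I k (2 * sqrt (\<bar>x\<bar> * path_length \<gamma> a s * path_length \<sigma> a t)))"
proof -
  have ab: "a \<le> b" using assms(5) by simp
  define A where "A = path_length \<gamma> a s"
  define B where "B = path_length \<sigma> a t"
  have A0: "A \<ge> 0" unfolding A_def using var_nonneg[OF assms(2)] assms(5) by auto
  have B0: "B \<ge> 0" unfolding B_def using var_nonneg[OF assms(4)] assms(6) by auto
  define c where "c k = hs_inner k (sig_level \<gamma> a k s) (sig_level \<sigma> a k t)" for k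
  have cb: "\<bar>c k\<bar> \<le> A ^ k / fact k * (B ^ k / fact k)" for k
    unfolding c_def A_def B_def by (rule coeff_bound[OF assms(1-6)])
  have fx: "f x = (\<Sum>k. c k * x ^ k)" for x
  proof -
    have "hs_inner k (sig_level (\<lambda>u. x *\<^sub>R \<gamma> u) a k s) (sig_level \<sigma> a k t) = c k * x ^ k" for k
    proof -
      have "hs_inner k (sig_level (\<lambda>u. x *\<^sub>R \<gamma> u) a k s) (sig_level \<sigma> a k t)
          = (\<Sum>w\<in>words k. x ^ k * (sig_coord \<gamma> a w s * sig_coord \<sigma> a w t))"
        unfolding hs_inner_def sig_level_def
        by (intro sum.cong refl) (auto simp: sig_scale[OF assms(1,2) ab assms(5)] words_def)
      also have "\<dots> = c k * x ^ k" unfolding c_def hs_inner_def sig_level_def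
        by (simp add: sum_distrib_left mult.commute)
      finally show ?thesis .
    qed
    then show ?thesis unfolding f_def sig_kernel_def by simp
  qed
  then have f_eq: "f = (\<lambda>x. \<Sum>k. c k * x ^ k)" by (rule ext)
  have sm: "summable (\<lambda>n. c n * y ^ n)" for y
  proof (rule summable_comparison_test'[OF summable_exp[of "A * B * \<bar>y\<bar>"], of 0])
    fix n :: nat
    have f1: "(1::real) \<le> fact n" by simp
    have "\<bar>c n * y ^ n\<bar> \<le> A ^ n / fact n * (B ^ n / fact n) * \<bar>y\<bar> ^ n"
      unfolding abs_mult power_abs by (intro mult_right_mono cb) auto
    also have "\<dots> = (A * B * \<bar>y\<bar>) ^ n / (fact n * fact n)" by (simp add: power_mult_distrib)
    also have "\<dots> \<le> (A * B * \<bar>y\<bar>) ^ n / (fact n * 1)"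
      using A0 B0 f1 by (intro divide_left_mono mult_left_mono) auto
    finally show "norm (c n * y ^ n) \<le> inverse (fact n) * (A * B * \<bar>y\<bar>) ^ n"
      by (simp add: field_simps)
  qed
  have PD: "(\<forall>y. summable (\<lambda>n. (diffs ^^ k) c n * y ^ n))
       \<and> (deriv ^^ k) f = (\<lambda>x. \<Sum>n. (diffs ^^ k) c n * x ^ n)" for k
    unfolding f_eq by (rule power_series_derivs[OF sm])
  have C1: "((deriv ^^ k) f has_real_derivative (deriv ^^ Suc k) f x) (at x)" for k x
  proof -
    have s: "\<And>y. summable (\<lambda>n. (diffs ^^ k) c n * y ^ n)" using PD by blast
    have "((\<lambda>x. \<Sum>n. (diffs ^^ k) c n * x ^ n) has_field_derivative (\<Sum>n. diffs ((diffs ^^ k) c) n * x ^ n)) (at x)"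
      by (rule termdiffs_strong_converges_everywhere[OF s])
    then show ?thesis using PD[of k] PD[of "Suc k"] by simp
  qed
  have C2: "(\<lambda>l. x ^ l * (fact (l + k) / fact l) * c (l + k)) sums ((deriv ^^ k) f x)" for k x
  proof -
    have "(\<lambda>l. (diffs ^^ k) c l * x ^ l) sums ((deriv ^^ k) f x)"
      using PD[of k] summable_sums by auto
    moreover have "(\<lambda>l. (diffs ^^ k) c l * x ^ l) = (\<lambda>l. x ^ l * (fact (l + k) / fact l) * c (l + k))"
      by (auto simp: diffs_iter)
    ultimately show ?thesis by simp
  qed
  have C3: "\<bar>(deriv ^^ k) f x\<bar>
      \<le> sqrt A ^ k * sqrt B ^ k / sqrt \<bar>x\<bar> ^ k * bessel_I k (2 * sqrt (\<bar>x\<bar> * A * B))"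
    if x: "x \<noteq> 0" for k x
  proof -
    define e where "e m = (\<bar>x\<bar> * A * B) ^ m / (fact m * fact (m + k))" for m
    have y0: "\<bar>x\<bar> * A * B \<ge> 0" using A0 B0 by simp
    have se: "summable e" unfolding e_def by (rule summable_besselish[OF y0])
    define bnd where "bnd m = (A * B) ^ k * e m" for m
    have sb: "summable bnd" unfolding bnd_def by (rule summable_mult[OF se])
    have fk: "(deriv ^^ k) f x = (\<Sum>l. x ^ l * (fact (l + k) / fact l) * c (l + k))"
      using C2[of x k] by (simp add: sums_iff)
    have tb: "norm (x ^ l * (fact (l + k) / fact l) * c (l + k)) \<le> bnd l" for l
    proof -
      have F0: "(fact (l + k) :: real) > 0" by simp
      have "norm (x ^ l * (fact (l + k) / fact l) * c (l + k))
          = \<bar>x\<bar> ^ l * (fact (l + k) / fact l) * \<bar>c (l + k)\<bar>"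
        by (simp add: abs_mult power_abs)
      also have "\<dots> \<le> \<bar>x\<bar> ^ l * (fact (l + k) / fact l) * (A ^ (l + k) / fact (l + k) * (B ^ (l + k) / fact (l + k)))"
        by (intro mult_left_mono cb) auto
      also have "\<dots> = bnd l"
        unfolding bnd_def e_def using F0
        by (simp add: field_simps power_mult_distrib power_add)
      finally show ?thesis .
    qed
    have "\<bar>(deriv ^^ k) f x\<bar> \<le> suminf bnd"
      unfolding fk using norm_suminf_le[OF tb sb] by simp
    also have "suminf bnd = sqrt A ^ k * sqrt B ^ k / sqrt \<bar>x\<bar> ^ k * bessel_I k (2 * sqrt (\<bar>x\<bar> * A * B))"
    proof -
      define r where "r = sqrt (\<bar>x\<bar> * A * B)"
      have bes: "bessel_I k (2 * sqrt (\<bar>x\<bar> * A * B)) = r ^ k * suminf e"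
      proof -
        have "(2 * r / 2) ^ (2 * m + k) / (fact m * fact (m + k)) = r ^ k * e m" for m
        proof -
          have "r ^ (2 * m) = (\<bar>x\<bar> * A * B) ^ m" unfolding r_def power_mult using y0 by simp
          then show ?thesis unfolding e_def by (simp add: power_add)
        qed
        then have "bessel_I k (2 * sqrt (\<bar>x\<bar> * A * B)) = (\<Sum>m. r ^ k * e m)"
          unfolding bessel_I_def r_def by simp
        also have "\<dots> = r ^ k * suminf e" by (rule suminf_mult[OF se])
        finally show ?thesis .
      qed
      have rk: "sqrt A ^ k * sqrt B ^ k / sqrt \<bar>x\<bar> ^ k * r ^ k = (A * B) ^ k"
      proof -
        have "r = sqrt \<bar>x\<bar> * sqrt A * sqrt B" unfolding r_def by (simp add: real_sqrt_mult)
        have gen: "s \<noteq> 0 \<Longrightarrow> p ^ k * q ^ k / s ^ k * (s * p * q) ^ k = (p * p) ^ k * (q * q) ^ k"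
          for p q s :: real
        proof -
          assume s: "s \<noteq> 0"
          have "p ^ k * q ^ k / s ^ k * (s * p * q) ^ k = (p ^ k * q ^ k * p ^ k * q ^ k) * (s ^ k / s ^ k)"
            by (simp add: power_mult_distrib)
          also have "\<dots> = (p * p) ^ k * (q * q) ^ k" using s by (simp add: power_mult_distrib)
          finally show ?thesis .
        qed
        have "sqrt \<bar>x\<bar> \<noteq> 0" using x by simp
        then have "sqrt A ^ k * sqrt B ^ k / sqrt \<bar>x\<bar> ^ k * r ^ k = (sqrt A * sqrt A) ^ k * (sqrt B * sqrt B) ^ k"
          unfolding \<open>r = sqrt \<bar>x\<bar> * sqrt A * sqrt B\<close> by (rule gen)
        also have "\<dots> = (A * B) ^ k"
          by (simp only: real_sqrt_mult_self abs_of_nonneg[OF A0] abs_of_nonneg[OF B0] power_mult_distrib)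
        finally show ?thesis .
      qed
      have "suminf bnd = (A * B) ^ k * suminf e" unfolding bnd_def by (rule suminf_mult[OF se])
      also have "\<dots> = sqrt A ^ k * sqrt B ^ k / sqrt \<bar>x\<bar> ^ k * (r ^ k * suminf e)"
        unfolding rk[symmetric] by (simp add: mult.assoc)
      finally show ?thesis unfolding bes .
    qed
    finally show ?thesis .
  qed
  show ?thesis using C1 C2 C3 unfolding c_def A_def B_def by blast
qed

end
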